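(* Let $(p_n)$ be a sequence of positive integers with $p_n\to+\infty$, and for each $n$ let $\mathbf{U}_{n1},\ldots,\mathbf{U}_{nn}$ be i.i.d. uniform on $\mathcal{S}^{p_n-1}$. Let $\mathcal{F}_{n\ell}$ be the $\sigma$-algebra generated by $\mathbf{U}_{n1},\ldots,\mathbf{U}_{n\ell}$ ($\mathcal{F}_{n0}$ trivial), ${\rm E}_{n\ell}$ the conditional expectation given $\mathcal{F}_{n\ell}$, and $$D^R_{n\ell}=\frac{\sqrt{2p_n}}{n}\sum_{i=1}^{\ell-1}\mathbf{U}_{ni}'\mathbf{U}_{n\ell},\qquad \ell=1,\ldots,n$$ (an empty sum being zero). Letting $\sigma^2_{n\ell}={\rm E}_{n,\ell-1}[(D^R_{n\ell})^2]$, the sum $\sum_{\ell=1}^n\sigma^2_{n\ell}$ converges to $1$ in quadratic mean as $n\to\infty$.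
   Context: $\mathcal{S}^{p-1}$ denotes the unit sphere of $\mathbb{R}^p$. *)

theory Defs
  imports "HOL-Probability.Probability"
begin

text \<open>Vectors of R^p are represented as functions nat => real, extensional on {..<p}
  (elements of the space of the product measure below).\<close>

definition Rp :: "nat \<Rightarrow> (nat \<Rightarrow> real) measure" where
  "Rp p = Pi\<^sub>M {..<p} (\<lambda>_. lborel)"

definition vinner :: "nat \<Rightarrow> (nat \<Rightarrow> real) \<Rightarrow> (nat \<Rightarrow> real) \<Rightarrow> real" where
  "vinner p x y = (\<Sum>k<p. x k * y k)"

definition vnorm :: "nat \<Rightarrow> (nat \<Rightarrow> real) \<Rightarrow> real" where
  "vnorm p x = sqrt (vinner p x x)"

text \<open>Uniform distribution on the unit sphere S^{p-1}: the normalized surface (cone) measure,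
  i.e. the image of the uniform distribution on the closed unit ball under radial projection.\<close>

definition uniform_sphere :: "nat \<Rightarrow> (nat \<Rightarrow> real) measure" where
  "uniform_sphere p =
     distr (uniform_measure (Rp p) {x \<in> space (Rp p). vnorm p x \<le> 1}) (Rp p)
       (\<lambda>x. if vnorm p x = 0 then x else restrict (\<lambda>k. x k / vnorm p x) {..<p})"

definition gen_sigma :: "'a measure \<Rightarrow> 'b measure \<Rightarrow> ('i \<Rightarrow> 'a \<Rightarrow> 'b) \<Rightarrow> 'i set \<Rightarrow> 'a measure" where
  "gen_sigma M N X I =
     sigma (space M) (\<Union>i\<in>I. {X i -` A \<inter> space M | A. A \<in> sets N})"

end

theory Submission
  imports Defs
begin


definition Nz :: "nat \<Rightarrow> (nat \<Rightarrow> real) \<Rightarrow> (nat \<Rightarrow> real)" where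
  "Nz p x = (if vnorm p x = 0 then x else restrict (\<lambda>k. x k / vnorm p x) {..<p})"

definition Bp :: "nat \<Rightarrow> (nat \<Rightarrow> real) set" where
  "Bp p = {x \<in> space (Rp p). vnorm p x \<le> 1}"

lemma us_eq: "uniform_sphere p = distr (uniform_measure (Rp p) (Bp p)) (Rp p) (Nz p)"
  unfolding uniform_sphere_def Bp_def Nz_def ..

lemma space_Rp: "space (Rp p) = PiE {..<p} (\<lambda>_. UNIV)"
  unfolding Rp_def by (simp add: space_PiM)

lemma Nz_meas[measurable]: "Nz p \<in> measurable (Rp p) (Rp p)"
  unfolding Nz_def vnorm_def vinner_def Rp_def by measurable

lemma Bp_sets[measurable]: "Bp p \<in> sets (Rp p)"
  unfolding Bp_def vnorm_def vinner_def Rp_def by measurable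

definition Tm :: "nat \<Rightarrow> (nat \<Rightarrow> nat) \<Rightarrow> (nat \<Rightarrow> real) \<Rightarrow> (nat \<Rightarrow> real) \<Rightarrow> (nat \<Rightarrow> real)" where
  "Tm p \<sigma> s x = restrict (\<lambda>k. s k * x (\<sigma> k)) {..<p}"

definition invok :: "nat \<Rightarrow> (nat \<Rightarrow> nat) \<Rightarrow> (nat \<Rightarrow> real) \<Rightarrow> bool" where
  "invok p \<sigma> s \<longleftrightarrow> (\<forall>k<p. \<sigma> k < p \<and> \<sigma> (\<sigma> k) = k \<and> (s k = 1 \<or> s k = -1) \<and> s (\<sigma> k) = s k)"

lemma Tm_meas[measurable]:
  assumes "invok p \<sigma> s" shows "Tm p \<sigma> s \<in> measurable (Rp p) (Rp p)"
proof -
  have "\<And>k. k < p \<Longrightarrow> \<sigma> k < p" using assms unfolding invok_def by auto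
  then show ?thesis unfolding Tm_def Rp_def
    by (intro measurable_restrict) auto
qed

lemma invok_bij: assumes "invok p \<sigma> s" shows "inj_on \<sigma> {..<p}" "\<sigma> ` {..<p} = {..<p}"
proof -
  show "inj_on \<sigma> {..<p}" using assms unfolding invok_def inj_on_def by (metis lessThan_iff)
  show "\<sigma> ` {..<p} = {..<p}" using assms unfolding invok_def by (auto, metis image_eqI lessThan_iff)
qed

lemma invok_sq: assumes "invok p \<sigma> s" "k < p" shows "s k * s k = 1"
  using assms unfolding invok_def by auto

lemma Tm_vinner: assumes "invok p \<sigma> s"
  shows "vinner p (Tm p \<sigma> s x) (Tm p \<sigma> s x) = vinner p x x"
proof -
  have "vinner p (Tm p \<sigma> s x) (Tm p \<sigma> s x) = (\<Sum>k<p. x (\<sigma> k) * x (\<sigma> k))"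
    unfolding vinner_def Tm_def
    by (intro sum.cong refl) (auto simp: invok_sq[OF assms] algebra_simps
        dest: invok_sq[OF assms] intro: mult.assoc
        simp del: )
  also have "\<dots> = (\<Sum>k\<in>\<sigma>`{..<p}. x k * x k)"
    by (subst sum.reindex[OF invok_bij(1)[OF assms]]) simp
  finally show ?thesis using invok_bij(2)[OF assms] by (simp add: vinner_def)
qed

lemma vnorm_Tm: assumes "invok p \<sigma> s" shows "vnorm p (Tm p \<sigma> s x) = vnorm p x"
  unfolding vnorm_def using Tm_vinner[OF assms] by simp

lemma Tm_Nz: assumes "invok p \<sigma> s"
  shows "Nz p (Tm p \<sigma> s x) = Tm p \<sigma> s (Nz p x)"
proof (cases "vnorm p x = 0")
  case True then show ?thesis unfolding Nz_def by (simp add: vnorm_Tm[OF assms])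
next
  case False
  have "\<And>k. k < p \<Longrightarrow> \<sigma> k < p" using assms unfolding invok_def by auto
  with False show ?thesis unfolding Nz_def Tm_def
    by (auto simp: vnorm_Tm[OF assms, unfolded Tm_def] fun_eq_iff)
qed

lemma lborel_scale:
  assumes "s = 1 \<or> s = -1" "A \<in> sets borel"
  shows "emeasure lborel {t::real. s * t \<in> A} = emeasure lborel A"
  using assms(1)
proof
  assume "s = -1"
  then have "{t::real. s * t \<in> A} = uminus -` A \<inter> space lborel" by auto
  also have "emeasure lborel \<dots> = emeasure (distr lborel borel uminus) A"
    using assms(2) by (subst emeasure_distr) auto
  finally show ?thesis by (simp add: lborel_distr_uminus)
qed simp

lemma distr_Rp_Tm: assumes "invok p \<sigma> s"
  shows "distr (Rp p) (Rp p) (Tm p \<sigma> s) = Rp p"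
proof -
  interpret product_sigma_finite "\<lambda>_::nat. lborel :: real measure"
    by unfold_locales
  have sl: "\<And>k. k < p \<Longrightarrow> \<sigma> k < p" "\<And>k. k < p \<Longrightarrow> \<sigma> (\<sigma> k) = k"
    "\<And>k. k < p \<Longrightarrow> s k = 1 \<or> s k = -1" "\<And>k. k < p \<Longrightarrow> s (\<sigma> k) = s k"
    using assms unfolding invok_def by auto
  have "distr (Rp p) (Rp p) (Tm p \<sigma> s) = PiM {..<p} (\<lambda>_. lborel)"
  proof (rule PiM_eqI)
    fix A :: "nat \<Rightarrow> real set" assume A: "\<And>i. i \<in> {..<p} \<Longrightarrow> A i \<in> sets lborel"
    have "Tm p \<sigma> s -` PiE {..<p} A \<inter> space (Rp p) = PiE {..<p} (\<lambda>j. {t. s j * t \<in> A (\<sigma> j)})"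
    proof (intro set_eqI iffI)
      fix x assume x: "x \<in> Tm p \<sigma> s -` PiE {..<p} A \<inter> space (Rp p)"
      show "x \<in> PiE {..<p} (\<lambda>j. {t. s j * t \<in> A (\<sigma> j)})"
      proof (rule PiE_I)
        fix j assume j: "j \<in> {..<p}"
        then have "Tm p \<sigma> s x (\<sigma> j) \<in> A (\<sigma> j)" using x sl by (auto simp: PiE_iff)
        then show "x j \<in> {t. s j * t \<in> A (\<sigma> j)}" using j sl unfolding Tm_def by auto
      next
        fix j assume "j \<notin> {..<p}" then show "x j = undefined" using x by (auto simp: space_Rp PiE_iff extensional_def)
      qed
    next
      fix x assume x: "x \<in> PiE {..<p} (\<lambda>j. {t. s j * t \<in> A (\<sigma> j)})"
      have "Tm p \<sigma> s x \<in> PiE {..<p} A"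
      proof (rule PiE_I)
        fix k assume k: "k \<in> {..<p}"
        have "\<forall>i\<in>{..<p}. s i * x i \<in> A (\<sigma> i)" using x by (simp add: PiE_iff)
        then have "s (\<sigma> k) * x (\<sigma> k) \<in> A (\<sigma> (\<sigma> k))" using k sl(1) by auto
        then have "s k * x (\<sigma> k) \<in> A k" using k sl(2)[of k] sl(4)[of k] by simp
        then show "Tm p \<sigma> s x k \<in> A k" using k unfolding Tm_def by auto
      qed (simp add: Tm_def)
      moreover have "x \<in> space (Rp p)" using x by (auto simp: space_Rp PiE_iff)
      ultimately show "x \<in> Tm p \<sigma> s -` PiE {..<p} A \<inter> space (Rp p)" by auto
    qed
    moreover have "PiE {..<p} A \<in> sets (Rp p)" unfolding Rp_def using A by (intro sets_PiM_I_finite) auto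
    ultimately have "emeasure (distr (Rp p) (Rp p) (Tm p \<sigma> s)) (PiE {..<p} A)
        = emeasure (Rp p) (PiE {..<p} (\<lambda>j. {t. s j * t \<in> A (\<sigma> j)}))"
      using assms by (subst emeasure_distr) auto
    also have "\<dots> = (\<Prod>j<p. emeasure lborel {t. s j * t \<in> A (\<sigma> j)})"
      unfolding Rp_def using A sl by (subst emeasure_PiM) auto
    also have "\<dots> = (\<Prod>j<p. emeasure lborel (A (\<sigma> j)))"
      using A sl by (intro prod.cong refl lborel_scale) auto
    also have "\<dots> = (\<Prod>j\<in>\<sigma>`{..<p}. emeasure lborel (A j))"
      by (subst prod.reindex[OF invok_bij(1)[OF assms]]) simp
    finally show "emeasure (distr (Rp p) (Rp p) (Tm p \<sigma> s)) (PiE {..<p} A)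
        = (\<Prod>i<p. emeasure lborel (A i))"
      using invok_bij(2)[OF assms] by simp
  qed (simp_all add: Rp_def)
  then show ?thesis by (simp add: Rp_def)
qed

lemma Tm_space: assumes "invok p \<sigma> s" "x \<in> space (Rp p)" shows "Tm p \<sigma> s x \<in> space (Rp p)"
  using measurable_space[OF Tm_meas[OF assms(1)] assms(2)] .

lemma distr_ball_Tm: assumes "invok p \<sigma> s"
  shows "distr (uniform_measure (Rp p) (Bp p)) (Rp p) (Tm p \<sigma> s) = uniform_measure (Rp p) (Bp p)"
proof (rule measure_eqI)
  let ?T = "Tm p \<sigma> s"
  have Tmeas: "?T \<in> measurable (uniform_measure (Rp p) (Bp p)) (Rp p)"
    using Tm_meas[OF assms] by (simp add: measurable_cong_sets[OF sets_uniform_measure refl])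
  fix A assume "A \<in> sets (distr (uniform_measure (Rp p) (Bp p)) (Rp p) ?T)"
  then have A[measurable]: "A \<in> sets (Rp p)" by simp
  have AT: "?T -` A \<inter> space (Rp p) \<in> sets (Rp p)" using Tm_meas[OF assms] A by measurable
  have eq: "(?T -` A \<inter> space (Rp p)) \<inter> Bp p = ?T -` (A \<inter> Bp p) \<inter> space (Rp p)"
    using Tm_space[OF assms] vnorm_Tm[OF assms] unfolding Bp_def by auto
  have "emeasure (distr (uniform_measure (Rp p) (Bp p)) (Rp p) ?T) A
      = emeasure (uniform_measure (Rp p) (Bp p)) (?T -` A \<inter> space (Rp p))"
    using Tmeas A by (subst emeasure_distr) auto
  also have "\<dots> = emeasure (Rp p) (Bp p \<inter> (?T -` A \<inter> space (Rp p))) / emeasure (Rp p) (Bp p)"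
    using AT by (rule emeasure_uniform_measure[OF Bp_sets])
  also have "Bp p \<inter> (?T -` A \<inter> space (Rp p)) = ?T -` (A \<inter> Bp p) \<inter> space (Rp p)"
    using eq by blast
  also have "emeasure (Rp p) (?T -` (A \<inter> Bp p) \<inter> space (Rp p)) = emeasure (distr (Rp p) (Rp p) ?T) (A \<inter> Bp p)"
    using Tm_meas[OF assms] by (subst emeasure_distr) auto
  also have "\<dots> = emeasure (Rp p) (A \<inter> Bp p)" by (simp add: distr_Rp_Tm[OF assms])
  finally show "emeasure (distr (uniform_measure (Rp p) (Bp p)) (Rp p) ?T) A = emeasure (uniform_measure (Rp p) (Bp p)) A"
    using A by (simp add: Int_commute)
qed simp

lemma distr_sphere_Tm: assumes "invok p \<sigma> s"
  shows "distr (uniform_sphere p) (Rp p) (Tm p \<sigma> s) = uniform_sphere p"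
proof -
  let ?T = "Tm p \<sigma> s" and ?\<nu> = "uniform_measure (Rp p) (Bp p)"
  have Tmeas: "?T \<in> measurable ?\<nu> (Rp p)"
    using Tm_meas[OF assms] by (simp add: measurable_cong_sets[OF sets_uniform_measure refl])
  have Nmeas: "Nz p \<in> measurable ?\<nu> (Rp p)"
    using Nz_meas by (simp add: measurable_cong_sets[OF sets_uniform_measure refl])
  have "distr (uniform_sphere p) (Rp p) ?T = distr ?\<nu> (Rp p) (?T \<circ> Nz p)"
    unfolding us_eq using Tm_meas[OF assms] Nmeas by (rule distr_distr)
  also have "\<dots> = distr ?\<nu> (Rp p) (Nz p \<circ> ?T)"
    by (rule distr_cong) (auto simp: Tm_Nz[OF assms])
  also have "\<dots> = distr (distr ?\<nu> (Rp p) ?T) (Rp p) (Nz p)"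
    using Nz_meas Tmeas by (rule distr_distr[symmetric])
  also have "\<dots> = uniform_sphere p" by (simp add: distr_ball_Tm[OF assms] us_eq)
  finally show ?thesis .
qed

lemma integral_sphere_Tm: fixes f :: "(nat \<Rightarrow> real) \<Rightarrow> real"
  assumes "invok p \<sigma> s" "f \<in> borel_measurable (Rp p)"
  shows "integral\<^sup>L (uniform_sphere p) f = (\<integral>y. f (Tm p \<sigma> s y) \<partial>uniform_sphere p)"
proof -
  have Tmeas: "Tm p \<sigma> s \<in> measurable (uniform_sphere p) (Rp p)"
    using Tm_meas[OF assms(1)] by (simp add: us_eq)
  have "integral\<^sup>L (uniform_sphere p) f = integral\<^sup>L (distr (uniform_sphere p) (Rp p) (Tm p \<sigma> s)) f"
    by (simp add: distr_sphere_Tm[OF assms(1)])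
  also have "\<dots> = (\<integral>y. f (Tm p \<sigma> s y) \<partial>uniform_sphere p)"
    using Tmeas assms(2) by (rule integral_distr)
  finally show ?thesis .
qed

lemma vinner_Nz: assumes "vnorm p x \<noteq> 0" shows "vinner p (Nz p x) (Nz p x) = 1"
proof -
  define S where "S = (\<Sum>k<p. x k * x k)"
  have S0: "S \<ge> 0" unfolding S_def by (intro sum_nonneg) auto
  have v: "vnorm p x = sqrt S" unfolding S_def vnorm_def vinner_def ..
  have "vinner p (Nz p x) (Nz p x) = (\<Sum>k<p. x k * x k / (sqrt S * sqrt S))"
    unfolding vinner_def Nz_def using assms v by (auto intro!: sum.cong)
  also have "\<dots> = S / (sqrt S * sqrt S)" unfolding S_def by (simp add: sum_divide_distrib)
  also have "\<dots> = 1" using S0 assms v by simp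
  finally show ?thesis .
qed

lemma AE_ball_nz: assumes "p > 0"
  shows "AE x in uniform_measure (Rp p) (Bp p). vnorm p x \<noteq> 0"
proof (rule AE_I')
  let ?N = "PiE {..<p} (\<lambda>_. {0::real})"
  have N: "?N \<in> sets (Rp p)" unfolding Rp_def by (intro sets_PiM_I_finite) auto
  interpret product_sigma_finite "\<lambda>_::nat. lborel :: real measure"
    by unfold_locales
  have "emeasure (Rp p) ?N = (\<Prod>k<p. emeasure lborel {0::real})"
    unfolding Rp_def by (subst emeasure_PiM) auto
  also have "\<dots> = 0" using assms by simp
  finally have N0: "emeasure (Rp p) ?N = 0" .
  have "emeasure (Rp p) (Bp p \<inter> ?N) \<le> emeasure (Rp p) ?N" using N by (intro emeasure_mono) auto
  then have "emeasure (Rp p) (Bp p \<inter> ?N) = 0" using N0 by simp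
  then have "emeasure (uniform_measure (Rp p) (Bp p)) ?N = 0" using N by simp
  then show "?N \<in> null_sets (uniform_measure (Rp p) (Bp p))" using N by (simp add: null_sets_def)
  show "{x \<in> space (uniform_measure (Rp p) (Bp p)). \<not> vnorm p x \<noteq> 0} \<subseteq> ?N"
  proof (intro subsetI)
    fix x assume "x \<in> {x \<in> space (uniform_measure (Rp p) (Bp p)). \<not> vnorm p x \<noteq> 0}"
    then have x: "x \<in> space (Rp p)" and "vnorm p x = 0" by auto
    then have "(\<Sum>k<p. x k * x k) = 0" unfolding vnorm_def vinner_def by simp
    then have "\<forall>k\<in>{..<p}. x k * x k = 0" by (subst (asm) sum_nonneg_eq_0_iff) auto
    then show "x \<in> ?N" using x by (auto simp: space_Rp PiE_iff fun_eq_iff extensional_def)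
  qed
qed

lemma unit_set_meas: "{y \<in> space (Rp p). vinner p y y = 1} \<in> sets (Rp p)"
  unfolding vinner_def Rp_def by measurable

lemma AE_sphere_unit: assumes "p > 0"
  shows "AE y in uniform_sphere p. vinner p y y = 1"
proof -
  have Nmeas: "Nz p \<in> measurable (uniform_measure (Rp p) (Bp p)) (Rp p)"
    using Nz_meas by (simp add: measurable_cong_sets[OF sets_uniform_measure refl])
  have S: "{y \<in> space (Rp p). vinner p y y = 1} \<in> sets (Rp p)"
    unfolding vinner_def Rp_def by measurable
  show ?thesis unfolding us_eq
    by (subst AE_distr_iff[OF Nmeas S]) (use AE_ball_nz[OF assms] in \<open>auto simp: vinner_Nz\<close>)
qed

lemma unit_coord: assumes "vinner p y y = 1" "k < p" shows "\<bar>y k\<bar> \<le> 1"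
proof -
  have "y k * y k \<le> (\<Sum>j<p. y j * y j)" using assms(2)
    by (intro member_le_sum) auto
  then have "(y k)^2 \<le> 1" using assms(1) unfolding vinner_def by (simp add: power2_eq_square)
  then show ?thesis by (simp add: abs_square_le_1)
qed

lemma invok_refl: "invok p id (\<lambda>i. if i = k then -1 else 1)"
  unfolding invok_def by auto

lemma invok_swap: "k < p \<Longrightarrow> m < p \<Longrightarrow> invok p (\<lambda>i. if i = k then m else if i = m then k else i) (\<lambda>_. 1)"
  unfolding invok_def by auto

lemma coord_meas_Rp[measurable]: "k < p \<Longrightarrow> (\<lambda>y. y k) \<in> borel_measurable (Rp p)"
  unfolding Rp_def by measurable

context fixes p :: nat assumes p0: "p > 0" and ps: "prob_space (uniform_sphere p)"
begin

interpretation S: prob_space "uniform_sphere p" by (rule ps)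

lemma sph_AE_bd: "AE y in uniform_sphere p. \<forall>k<p. \<bar>y k\<bar> \<le> 1"
  using AE_sphere_unit[OF p0] by eventually_elim (auto intro: unit_coord)

lemma sph_meas[measurable]: "k < p \<Longrightarrow> (\<lambda>y. y k) \<in> borel_measurable (uniform_sphere p)"
  by (simp add: us_eq)

lemma sph_int1: "k < p \<Longrightarrow> integrable (uniform_sphere p) (\<lambda>y. y k)"
  by (rule S.integrable_const_bound[where B=1]) (use sph_AE_bd in \<open>auto\<close>)

lemma sph_int2: "k < p \<Longrightarrow> m < p \<Longrightarrow> integrable (uniform_sphere p) (\<lambda>y. y k * y m)"
proof (rule S.integrable_const_bound[where B=1])
  assume km: "k < p" "m < p"
  show "AE x in uniform_sphere p. norm (x k * x m) \<le> 1"
    using sph_AE_bd by eventually_elim (use km in \<open>auto simp: abs_mult intro: mult_le_one\<close>)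
qed simp

lemma sph_mom1: assumes "k < p" shows "(\<integral>y. y k \<partial>uniform_sphere p) = 0"
proof -
  have "(\<integral>y. y k \<partial>uniform_sphere p) = (\<integral>y. Tm p id (\<lambda>i. if i = k then -1 else 1) y k \<partial>uniform_sphere p)"
    using assms by (intro integral_sphere_Tm invok_refl) simp
  also have "\<dots> = (\<integral>y. - y k \<partial>uniform_sphere p)" using assms by (simp add: Tm_def)
  finally show ?thesis by simp
qed

lemma sph_mom2: assumes "k < p" "m < p" "k \<noteq> m" shows "(\<integral>y. y k * y m \<partial>uniform_sphere p) = 0"
proof -
  have "(\<integral>y. y k * y m \<partial>uniform_sphere p) =
      (\<integral>y. Tm p id (\<lambda>i. if i = k then -1 else 1) y k * Tm p id (\<lambda>i. if i = k then -1 else 1) y m \<partial>uniform_sphere p)"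
    using assms by (intro integral_sphere_Tm invok_refl) simp
  also have "\<dots> = (\<integral>y. - (y k * y m) \<partial>uniform_sphere p)" using assms by (simp add: Tm_def)
  finally show ?thesis by simp
qed

lemma sph_mom_sq0: assumes "k < p" shows "(\<integral>y. y k * y k \<partial>uniform_sphere p) = (\<integral>y. y 0 * y 0 \<partial>uniform_sphere p)"
proof -
  let ?\<sigma> = "\<lambda>i. if i = k then 0 else if i = 0 then k else i"
  have "(\<integral>y. y k * y k \<partial>uniform_sphere p) =
      (\<integral>y. Tm p ?\<sigma> (\<lambda>_. 1) y k * Tm p ?\<sigma> (\<lambda>_. 1) y k \<partial>uniform_sphere p)"
    using assms p0 by (intro integral_sphere_Tm invok_swap) simp_all
  also have "\<dots> = (\<integral>y. y 0 * y 0 \<partial>uniform_sphere p)" using assms by (simp add: Tm_def)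
  finally show ?thesis .
qed

lemma sph_mom_sq: assumes "k < p" shows "(\<integral>y. y k * y k \<partial>uniform_sphere p) = 1 / real p"
proof -
  have "(\<Sum>j<p. (\<integral>y. y j * y j \<partial>uniform_sphere p)) = (\<integral>y. (\<Sum>j<p. y j * y j) \<partial>uniform_sphere p)"
    by (subst Bochner_Integration.integral_sum) (auto intro!: sph_int2)
  also have "\<dots> = (\<integral>y. 1 \<partial>uniform_sphere p)"
    by (rule integral_cong_AE) (use AE_sphere_unit[OF p0] in \<open>auto simp: vinner_def\<close>)
  also have "\<dots> = 1" by (simp add: S.prob_space)
  moreover have "(\<Sum>j<p. (\<integral>y. y j * y j \<partial>uniform_sphere p)) = (\<Sum>j<p. (\<integral>y. y 0 * y 0 \<partial>uniform_sphere p))"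
    by (intro sum.cong refl sph_mom_sq0) simp
  ultimately have "real p * (\<integral>y. y 0 * y 0 \<partial>uniform_sphere p) = 1"
    by simp
  then show ?thesis using sph_mom_sq0[OF assms] p0 by (simp add: field_simps)
qed

lemma sph_mom: assumes "k < p" "m < p"
  shows "(\<integral>y. y k * y m \<partial>uniform_sphere p) = (if k = m then 1 / real p else 0)"
  using assms sph_mom2 sph_mom_sq by auto

end



definition Fs :: "'a measure \<Rightarrow> nat \<Rightarrow> (nat \<Rightarrow> 'a \<Rightarrow> (nat \<Rightarrow> real)) \<Rightarrow> nat \<Rightarrow> 'a measure" where
  "Fs M p U j = gen_sigma M (Rp p) U {1..j}"

definition aa :: "(nat \<Rightarrow> 'a \<Rightarrow> (nat \<Rightarrow> real)) \<Rightarrow> nat \<Rightarrow> 'a \<Rightarrow> nat \<Rightarrow> real" where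
  "aa U l x k = (\<Sum>i\<in>{1..<l}. U i x k)"

definition QQ :: "nat \<Rightarrow> (nat \<Rightarrow> 'a \<Rightarrow> (nat \<Rightarrow> real)) \<Rightarrow> nat \<Rightarrow> 'a \<Rightarrow> real" where
  "QQ p U l x = (\<Sum>k<p. aa U l x k * aa U l x k)"

definition XX :: "nat \<Rightarrow> (nat \<Rightarrow> 'a \<Rightarrow> (nat \<Rightarrow> real)) \<Rightarrow> nat \<Rightarrow> 'a \<Rightarrow> real" where
  "XX p U l x = (\<Sum>k<p. U l x k * aa U l x k)"

definition EE :: "'a measure \<Rightarrow> (nat \<Rightarrow> 'a \<Rightarrow> (nat \<Rightarrow> real)) \<Rightarrow> nat \<Rightarrow> nat set" where
  "EE M U i = {}"

lemma sum_swap_tri: "(\<Sum>l\<in>{1..n}. \<Sum>j\<in>{1..<l}. f j) = (\<Sum>j\<in>{1..n}. real (n - j) * (f j :: real))"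
proof (induction n)
  case 0 then show ?case by simp
next
  case (Suc n)
  have "(\<Sum>l\<in>{1..Suc n}. \<Sum>j\<in>{1..<l}. f j) = (\<Sum>l\<in>{1..n}. \<Sum>j\<in>{1..<l}. f j) + (\<Sum>j\<in>{1..<Suc n}. f j)"
    by simp
  also have "\<dots> = (\<Sum>j\<in>{1..n}. real (n - j) * f j) + (\<Sum>j\<in>{1..n}. f j)"
    using Suc by (simp add: atLeastLessThanSuc_atLeastAtMost)
  also have "\<dots> = (\<Sum>j\<in>{1..n}. real (Suc n - j) * f j)"
    by (simp add: sum.distrib[symmetric] Suc_diff_le algebra_simps)
  also have "\<dots> = (\<Sum>j\<in>{1..Suc n}. real (Suc n - j) * f j)" by simp
  finally show ?case .
qed

lemma gauss_sum: "(\<Sum>l\<in>{1..n}. real l - 1) = real n * (real n - 1) / 2"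
  by (induction n) (auto simp: algebra_simps)

lemma sq_ineq: "((a::real) - b)^2 \<le> 2 * a^2 + 2 * b^2"
proof -
  have "0 \<le> (a + b)^2" by simp
  then show ?thesis by (simp add: power2_eq_square algebra_simps)
qed

locale setting =
  fixes M :: "'a measure" and U :: "nat \<Rightarrow> 'a \<Rightarrow> (nat \<Rightarrow> real)" and n p :: nat
  assumes P: "prob_space M" and p0: "p > 0" and n1: "n \<ge> 1"
    and ind: "prob_space.indep_vars M (\<lambda>_. Rp p) U {1..n}"
    and uni: "\<And>i. i \<in> {1..n} \<Longrightarrow> distr M (Rp p) (U i) = uniform_sphere p"
begin

sublocale prob_space M by (rule P)

lemma U_meas[measurable]: "i \<in> {1..n} \<Longrightarrow> U i \<in> measurable M (Rp p)"
  using ind unfolding indep_vars_def by auto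

lemma ps: "prob_space (uniform_sphere p)"
proof -
  have "prob_space (distr M (Rp p) (U 1))" by (rule prob_space_distr) (use U_meas n1 in auto)
  then show ?thesis using uni[of 1] n1 by simp
qed

lemma coordU_meas[measurable]: "i \<in> {1..n} \<Longrightarrow> k < p \<Longrightarrow> (\<lambda>x. U i x k) \<in> borel_measurable M"
  using measurable_comp[OF U_meas[of i] coord_meas_Rp[of k p]] by (simp add: comp_def)

lemma AE_U: "AE x in M. \<forall>i\<in>{1..n}. vinner p (U i x) (U i x) = 1 \<and> (\<forall>k<p. \<bar>U i x k\<bar> \<le> 1)"
proof (rule AE_finite_allI)
  fix i assume i: "i \<in> {1..n}"
  have S: "{y \<in> space (Rp p). vinner p y y = 1 \<and> (\<forall>k<p. \<bar>y k\<bar> \<le> 1)} \<in> sets (Rp p)"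
  proof -
    have S1: "{y \<in> space (Rp p). vinner p y y = 1} \<in> sets (Rp p)"
      by (rule unit_set_meas)
    have S2: "\<And>k. k < p \<Longrightarrow> {y \<in> space (Rp p). \<bar>y k\<bar> \<le> 1} \<in> sets (Rp p)"
      by measurable
    have "{y \<in> space (Rp p). vinner p y y = 1} \<inter> (space (Rp p) \<inter> (\<Inter>k\<in>{..<p}. {y \<in> space (Rp p). \<bar>y k\<bar> \<le> 1})) \<in> sets (Rp p)"
      using S1 S2 p0 by (intro sets.Int sets.finite_INT) auto
    also have "{y \<in> space (Rp p). vinner p y y = 1} \<inter> (space (Rp p) \<inter> (\<Inter>k\<in>{..<p}. {y \<in> space (Rp p). \<bar>y k\<bar> \<le> 1}))
      = {y \<in> space (Rp p). vinner p y y = 1 \<and> (\<forall>k<p. \<bar>y k\<bar> \<le> 1)}" by auto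
    finally show ?thesis .
  qed
  have "AE y in distr M (Rp p) (U i). vinner p y y = 1 \<and> (\<forall>k<p. \<bar>y k\<bar> \<le> 1)"
    unfolding uni[OF i] using AE_sphere_unit[OF p0] by eventually_elim (auto intro: unit_coord)
  then show "AE x in M. vinner p (U i x) (U i x) = 1 \<and> (\<forall>k<p. \<bar>U i x k\<bar> \<le> 1)"
    by (rule AE_distr_iff[OF U_meas[OF i] S, THEN iffD1])
qed simp

lemma intU: "i \<in> {1..n} \<Longrightarrow> h \<in> borel_measurable (Rp p) \<Longrightarrow> integrable (uniform_sphere p) (h::_\<Rightarrow>real)
   \<Longrightarrow> (\<integral>x. h (U i x) \<partial>M) = (\<integral>y. h y \<partial>uniform_sphere p) \<and> integrable M (\<lambda>x. h (U i x))"
  using integral_distr[OF U_meas, of i h] integrable_distr_eq[OF U_meas, of i h] uni[of i] by simp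

definition "GG j = (\<Union>i\<in>{1..j}. {U i -` A \<inter> space M | A. A \<in> sets (Rp p)})"

lemma GG_Pow: "GG j \<subseteq> Pow (space M)" unfolding GG_def by auto

lemma Fs_sets: "sets (Fs M p U j) = sigma_sets (space M) (GG j)"
  and Fs_space: "space (Fs M p U j) = space M"
  unfolding Fs_def gen_sigma_def GG_def[symmetric]
  using GG_Pow by (simp_all add: sets_measure_of space_measure_of)

lemma Fs_sub: assumes "j \<le> n" shows "sets (Fs M p U j) \<subseteq> sets M"
proof -
  have "GG j \<subseteq> sets M" unfolding GG_def using assms
    by (auto intro!: measurable_sets[OF U_meas])
  then show ?thesis unfolding Fs_sets by (rule sets.sigma_sets_subset)
qed

lemma subalg: "j \<le> n \<Longrightarrow> subalgebra M (Fs M p U j)"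
  unfolding subalgebra_def using Fs_sub Fs_space by auto

lemma sfs: "j \<le> n \<Longrightarrow> sigma_finite_subalgebra M (Fs M p U j)"
  by (intro finite_measure_subalgebra_is_sigma_finite)
     (simp add: finite_measure_subalgebra_def finite_measure_subalgebra_axioms_def subalg finite_measure_axioms)

lemma UF_meas: assumes "j \<le> n" "i \<in> {1..j}" shows "U i \<in> measurable (Fs M p U j) (Rp p)"
proof (rule measurableI)
  fix x assume "x \<in> space (Fs M p U j)"
  then show "U i x \<in> space (Rp p)" using assms measurable_space[OF U_meas[of i]] by (auto simp: Fs_space)
next
  fix A assume "A \<in> sets (Rp p)"
  then have "U i -` A \<inter> space M \<in> GG j" unfolding GG_def using assms by blast
  then show "U i -` A \<inter> space (Fs M p U j) \<in> sets (Fs M p U j)"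
    by (simp add: Fs_sets Fs_space)
qed

lemma coordF_meas: "j \<le> n \<Longrightarrow> i \<in> {1..j} \<Longrightarrow> k < p \<Longrightarrow> (\<lambda>x. U i x k) \<in> borel_measurable (Fs M p U j)"
  using measurable_comp[OF UF_meas[of j i] coord_meas_Rp[of k p]] by (simp add: comp_def)

lemma aaF: assumes "j \<le> n" "l - 1 \<le> j" "k < p" shows "(\<lambda>x. aa U l x k) \<in> borel_measurable (Fs M p U j)"
  unfolding aa_def using assms by (intro borel_measurable_sum coordF_meas) auto

lemma XXF: assumes "j \<le> n" "l \<in> {1..j}" shows "XX p U l \<in> borel_measurable (Fs M p U j)"
  unfolding XX_def using assms by (intro borel_measurable_sum borel_measurable_times coordF_meas aaF) auto

lemma QQF: assumes "j \<le> n" "l - 1 \<le> j" shows "QQ p U l \<in> borel_measurable (Fs M p U j)"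
  unfolding QQ_def using assms by (intro borel_measurable_sum borel_measurable_times aaF) auto

lemma aa_meas[measurable]: "k < p \<Longrightarrow> l \<le> n + 1 \<Longrightarrow> (\<lambda>x. aa U l x k) \<in> borel_measurable M"
  using aaF[of n l k] by (intro measurable_from_subalg[OF subalg[OF order_refl]]) auto

lemma XX_meas[measurable]: "l \<in> {1..n} \<Longrightarrow> XX p U l \<in> borel_measurable M"
  using XXF[of n l] by (intro measurable_from_subalg[OF subalg[OF order_refl]]) auto

lemma QQ_meas[measurable]: "l \<le> n + 1 \<Longrightarrow> QQ p U l \<in> borel_measurable M"
  using QQF[of n l] by (intro measurable_from_subalg[OF subalg[OF order_refl]]) auto

lemma indep_set_mono: "indep_set A B \<Longrightarrow> A' \<subseteq> A \<Longrightarrow> B' \<subseteq> B \<Longrightarrow> indep_set A' B'"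
  unfolding indep_set_def by (rule indep_sets_mono_sets) (auto split: bool.split)

lemma indepF: assumes l: "l \<in> {1..n}"
  shows "indep_set (sets (Fs M p U (l - 1))) (sigma_sets (space M) {U l -` A \<inter> space M | A. A \<in> sets (Rp p)})"
proof -
  define E where "E i = {U i -` A \<inter> space M | A. A \<in> sets (Rp p)}" for i
  define I where "I = case_bool {1..l-1} {l}"
  have "indep_sets E {1..n}" using ind unfolding indep_vars_def2 E_def by auto
  then have "indep_sets E (\<Union>j\<in>UNIV. I j)"
    by (rule indep_sets_mono_index[rotated]) (use l in \<open>auto simp: I_def UNIV_bool\<close>)
  then have "indep_sets (\<lambda>j. sigma_sets (space M) (\<Union>i\<in>I j. E i)) UNIV"
  proof (rule indep_sets_collect_sigma)
    fix i j show "Int_stable (E i)"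
      unfolding Int_stable_def E_def
    proof safe
      fix A B assume "A \<in> sets (Rp p)" "B \<in> sets (Rp p)"
      then show "\<exists>C. U i -` A \<inter> space M \<inter> (U i -` B \<inter> space M) = U i -` C \<inter> space M \<and> C \<in> sets (Rp p)"
        by (intro exI[of _ "A \<inter> B"]) auto
    qed
  next
    show "disjoint_family_on I UNIV" unfolding disjoint_family_on_def I_def
      using l by (auto split: bool.split)
  qed
  moreover have "(\<lambda>j. sigma_sets (space M) (\<Union>i\<in>I j. E i)) =
      case_bool (sets (Fs M p U (l - 1))) (sigma_sets (space M) {U l -` A \<inter> space M | A. A \<in> sets (Rp p)})"
    by (rule ext) (auto simp: I_def Fs_sets GG_def E_def split: bool.split)
  ultimately show ?thesis unfolding indep_set_def by simp
qed

lemma fact: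
  fixes G h :: "_ \<Rightarrow> real"
  assumes l: "l \<in> {1..n}" and G: "G \<in> borel_measurable (Fs M p U (l - 1))" "integrable M G"
    and h: "h \<in> borel_measurable (Rp p)" "integrable (uniform_sphere p) h"
  shows "integrable M (\<lambda>x. G x * h (U l x))"
    and "(\<integral>x. G x * h (U l x) \<partial>M) = (\<integral>x. G x \<partial>M) * (\<integral>y. h y \<partial>uniform_sphere p)"
proof -
  have l1: "l - 1 \<le> n" using l by auto
  have Gm: "G \<in> borel_measurable M" by (rule measurable_from_subalg[OF subalg[OF l1] G(1)])
  have hm: "(\<lambda>x. h (U l x)) \<in> borel_measurable M"
    using measurable_comp[OF U_meas[OF l] h(1)] by (simp add: comp_def)
  have hI: "integrable M (\<lambda>x. h (U l x))" "(\<integral>x. h (U l x) \<partial>M) = (\<integral>y. h y \<partial>uniform_sphere p)"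
    using intU[OF l h] by auto
  have iv: "indep_var borel G borel (\<lambda>x. h (U l x))"
    unfolding indep_var_eq
  proof (intro conjI)
    show "random_variable borel G" "random_variable borel (\<lambda>x. h (U l x))" using Gm hm by auto
    show "indep_set (sigma_sets (space M) {G -` A \<inter> space M |A. A \<in> sets borel})
        (sigma_sets (space M) {(\<lambda>x. h (U l x)) -` A \<inter> space M |A. A \<in> sets borel})"
    proof (rule indep_set_mono[OF indepF[OF l]])
      have "{G -` A \<inter> space M |A. A \<in> sets borel} \<subseteq> sets (Fs M p U (l - 1))"
        using measurable_sets[OF G(1)] by (auto simp: Fs_space)
      then show "sigma_sets (space M) {G -` A \<inter> space M |A. A \<in> sets borel} \<subseteq> sets (Fs M p U (l - 1))"
        using sets.sigma_sets_subset[of "{G -` A \<inter> space M |A. A \<in> sets borel}" "Fs M p U (l - 1)"]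
        by (simp add: Fs_space)
      have "{(\<lambda>x. h (U l x)) -` A \<inter> space M |A. A \<in> sets borel} \<subseteq> {U l -` A \<inter> space M |A. A \<in> sets (Rp p)}"
      proof safe
        fix A :: "real set" assume "A \<in> sets borel"
        then have "h -` A \<inter> space (Rp p) \<in> sets (Rp p)" using measurable_sets[OF h(1)] by auto
        moreover have "(\<lambda>x. h (U l x)) -` A \<inter> space M = U l -` (h -` A \<inter> space (Rp p)) \<inter> space M"
          using measurable_space[OF U_meas[OF l]] by auto
        ultimately show "\<exists>B. (\<lambda>x. h (U l x)) -` A \<inter> space M = U l -` B \<inter> space M \<and> B \<in> sets (Rp p)"
          by blast
      qed
      then show "sigma_sets (space M) {(\<lambda>x. h (U l x)) -` A \<inter> space M |A. A \<in> sets borel}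
          \<subseteq> sigma_sets (space M) {U l -` A \<inter> space M |A. A \<in> sets (Rp p)}"
        by (rule sigma_sets_mono')
    qed
  qed
  show "integrable M (\<lambda>x. G x * h (U l x))" by (rule indep_var_integrable[OF iv G(2) hI(1)])
  show "(\<integral>x. G x * h (U l x) \<partial>M) = (\<integral>x. G x \<partial>M) * (\<integral>y. h y \<partial>uniform_sphere p)"
    using indep_var_lebesgue_integral[OF iv G(2) hI(1)] hI(2) by simp
qed

lemma intbd: "f \<in> borel_measurable M \<Longrightarrow> (AE x in M. \<bar>f x\<bar> \<le> B) \<Longrightarrow> integrable M (f :: _ \<Rightarrow> real)"
  by (rule integrable_const_bound[where B=B]) auto

lemma AE_aa: "AE x in M. \<forall>l\<le>n+1. \<forall>k<p. \<bar>aa U l x k\<bar> \<le> real n"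
  using AE_U
proof eventually_elim
  case (elim x)
  show ?case
  proof safe
    fix l k assume l: "l \<le> n + 1" and k: "k < p"
    have "\<bar>aa U l x k\<bar> \<le> (\<Sum>i\<in>{1..<l}. \<bar>U i x k\<bar>)" unfolding aa_def by (rule sum_abs)
    also have "\<dots> \<le> real (card {1..<l}) * 1"
      by (rule sum_bounded_above) (use elim l k in auto)
    also have "\<dots> \<le> real n" using l by simp
    finally show "\<bar>aa U l x k\<bar> \<le> real n" .
  qed
qed

lemma AE_XX: "AE x in M. \<forall>l\<in>{1..n}. \<bar>XX p U l x\<bar> \<le> real p * real n"
  using AE_U AE_aa
proof eventually_elim
  case (elim x)
  show ?case
  proof safe
    fix l assume l: "l \<in> {1..n}"
    have "\<bar>XX p U l x\<bar> \<le> (\<Sum>k<p. \<bar>U l x k * aa U l x k\<bar>)" unfolding XX_def by (rule sum_abs)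
    also have "\<dots> \<le> real (card {..<p}) * real n"
    proof (rule sum_bounded_above)
      fix k assume k: "k \<in> {..<p}"
      have "\<bar>U l x k\<bar> \<le> 1" "\<bar>aa U l x k\<bar> \<le> real n" using elim l k by auto
      then show "\<bar>U l x k * aa U l x k\<bar> \<le> real n"
        by (simp add: abs_mult) (metis abs_ge_zero mult_le_one mult.commute mult_left_le order_trans)
    qed
    finally show "\<bar>XX p U l x\<bar> \<le> real p * real n" by simp
  qed
qed

lemma AE_QQ: "AE x in M. \<forall>l\<le>n+1. \<bar>QQ p U l x\<bar> \<le> real p * (real n * real n)"
  using AE_aa
proof eventually_elim
  case (elim x)
  show ?case
  proof safe
    fix l assume l: "l \<le> n + 1"
    have "\<bar>QQ p U l x\<bar> \<le> (\<Sum>k<p. \<bar>aa U l x k * aa U l x k\<bar>)" unfolding QQ_def by (rule sum_abs)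
    also have "\<dots> \<le> real (card {..<p}) * (real n * real n)"
    proof (rule sum_bounded_above)
      fix k assume k: "k \<in> {..<p}"
      have "\<bar>aa U l x k\<bar> \<le> real n" using elim l k by auto
      then have "\<bar>aa U l x k\<bar> * \<bar>aa U l x k\<bar> \<le> real n * real n" by (intro mult_mono) auto
      then show "\<bar>aa U l x k * aa U l x k\<bar> \<le> real n * real n"
        by (simp add: abs_mult)
    qed
    finally show "\<bar>QQ p U l x\<bar> \<le> real p * (real n * real n)" by simp
  qed
qed

lemma mom_cond:
  assumes l: "l \<in> {1..n}" and A: "A \<in> sets (Fs M p U (l - 1))"
  shows "(\<integral>x. indicator A x * (XX p U l x * XX p U l x) \<partial>M) = (\<integral>x. indicator A x * QQ p U l x \<partial>M) / real p"
proof -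
  define G where "G k m x = indicator A x * aa U l x k * aa U l x m" for k m x
  have l1: "l - 1 \<le> n" using l by auto
  have AM: "A \<in> sets M" using Fs_sub[OF l1] A by auto
  have GF: "G k m \<in> borel_measurable (Fs M p U (l - 1))" if "k < p" "m < p" for k m
    unfolding G_def using that A l1 by (intro borel_measurable_times borel_measurable_indicator aaF) auto
  have GI: "integrable M (G k m)" if "k < p" "m < p" for k m
  proof (rule intbd)
    show "G k m \<in> borel_measurable M" using GF[OF that] by (rule measurable_from_subalg[OF subalg[OF l1]])
    show "AE x in M. \<bar>G k m x\<bar> \<le> real n * real n"
      using AE_aa
    proof eventually_elim
      case (elim x)
      then have "\<bar>aa U l x k\<bar> \<le> real n" "\<bar>aa U l x m\<bar> \<le> real n" using l that by auto
      then have "\<bar>aa U l x k\<bar> * \<bar>aa U l x m\<bar> \<le> real n * real n" by (intro mult_mono) auto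
      then have "\<bar>aa U l x k * aa U l x m\<bar> \<le> real n * real n" by (simp add: abs_mult)
      then show ?case unfolding G_def by (auto simp: indicator_def abs_mult)
    qed
  qed
  have hm: "(\<lambda>y. y k * y m) \<in> borel_measurable (Rp p)" if "k < p" "m < p" for k m
    using that by measurable
  have F1: "integrable M (\<lambda>x. G k m x * (U l x k * U l x m))"
    and F2: "(\<integral>x. G k m x * (U l x k * U l x m) \<partial>M) = (\<integral>x. G k m x \<partial>M) * (if k = m then 1 / real p else 0)"
    if "k < p" "m < p" for k m
    using fact[OF l GF[OF that] GI[OF that] hm[OF that] sph_int2[OF p0 ps that]] sph_mom[OF p0 ps that] by auto
  have "(\<integral>x. indicator A x * (XX p U l x * XX p U l x) \<partial>M) = (\<integral>x. (\<Sum>k<p. \<Sum>m<p. G k m x * (U l x k * U l x m)) \<partial>M)"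
    by (rule Bochner_Integration.integral_cong)
       (simp_all add: XX_def G_def sum_product sum_distrib_left mult_ac)
  also have "\<dots> = (\<Sum>k<p. (\<integral>x. (\<Sum>m<p. G k m x * (U l x k * U l x m)) \<partial>M))"
    by (rule Bochner_Integration.integral_sum) (auto intro!: integrable_sum F1)
  also have "\<dots> = (\<Sum>k<p. \<Sum>m<p. (\<integral>x. G k m x * (U l x k * U l x m) \<partial>M))"
    by (intro sum.cong refl Bochner_Integration.integral_sum) (auto intro!: F1)
  also have "\<dots> = (\<Sum>k<p. \<Sum>m<p. (\<integral>x. G k m x \<partial>M) * (if k = m then 1 / real p else 0))"
    using F2 by simp
  also have "\<dots> = (\<Sum>k<p. (\<integral>x. G k k x \<partial>M) / real p)"
    by (simp add: if_distrib cong: if_cong)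
  also have "\<dots> = (\<integral>x. (\<Sum>k<p. G k k x) \<partial>M) / real p"
    by (subst Bochner_Integration.integral_sum) (auto intro!: GI simp: sum_divide_distrib)
  also have "(\<integral>x. (\<Sum>k<p. G k k x) \<partial>M) = (\<integral>x. indicator A x * QQ p U l x \<partial>M)"
    by (rule Bochner_Integration.integral_cong) (simp_all add: QQ_def G_def sum_distrib_left mult_ac)
  finally show ?thesis .
qed

lemma int_XX: "l \<in> {1..n} \<Longrightarrow> integrable M (XX p U l)"
  by (rule intbd[where B="real p * real n"]) (use AE_XX in \<open>auto\<close>)

lemma int_XX2: "j \<in> {1..n} \<Longrightarrow> l \<in> {1..n} \<Longrightarrow> integrable M (\<lambda>x. c * (XX p U j x * XX p U l x))"
proof (rule intbd[where B="\<bar>c\<bar> * ((real p * real n) * (real p * real n))"])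
  assume jl: "j \<in> {1..n}" "l \<in> {1..n}"
  show "(\<lambda>x. c * (XX p U j x * XX p U l x)) \<in> borel_measurable M" using jl by measurable
  show "AE x in M. \<bar>c * (XX p U j x * XX p U l x)\<bar> \<le> \<bar>c\<bar> * ((real p * real n) * (real p * real n))"
    using AE_XX
  proof eventually_elim
    case (elim x)
    then have "\<bar>XX p U j x\<bar> \<le> real p * real n" "\<bar>XX p U l x\<bar> \<le> real p * real n" using jl by auto
    then have "\<bar>XX p U j x\<bar> * \<bar>XX p U l x\<bar> \<le> (real p * real n) * (real p * real n)" by (intro mult_mono) auto
    then show ?case by (simp add: abs_mult mult_left_mono)
  qed
qed

lemma int_QQ: "l \<le> n + 1 \<Longrightarrow> integrable M (QQ p U l)"
  by (rule intbd[where B="real p * (real n * real n)"]) (use AE_QQ in \<open>auto\<close>)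

lemma condexp:
  assumes l: "l \<in> {1..n}"
  shows "AE x in M. real_cond_exp M (Fs M p U (l - 1)) (\<lambda>x. c * (XX p U l x * XX p U l x)) x = c / real p * QQ p U l x"
proof -
  have l1: "l - 1 \<le> n" using l by auto
  interpret S: sigma_finite_subalgebra M "Fs M p U (l - 1)" by (rule sfs[OF l1])
  show ?thesis
  proof (rule S.real_cond_exp_charact)
    fix A assume A: "A \<in> sets (Fs M p U (l - 1))"
    have "(\<integral>x. indicator A x * (c * (XX p U l x * XX p U l x)) \<partial>M) = c * (\<integral>x. indicator A x * (XX p U l x * XX p U l x) \<partial>M)"
      by (subst integral_mult_right_zero[symmetric]) (simp add: mult_ac)
    also have "\<dots> = c * ((\<integral>x. indicator A x * QQ p U l x \<partial>M) / real p)" by (simp add: mom_cond[OF l A])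
    also have "\<dots> = (\<integral>x. c / real p * (indicator A x * QQ p U l x) \<partial>M)" by simp
    also have "\<dots> = (\<integral>x. indicator A x * (c / real p * QQ p U l x) \<partial>M)" by (simp add: mult_ac)
    finally show "(\<integral>x\<in>A. c * (XX p U l x * XX p U l x) \<partial>M) = (\<integral>x\<in>A. c / real p * QQ p U l x \<partial>M)"
      by (simp only: set_lebesgue_integral_def real_scaleR_def)
  next
    show "integrable M (\<lambda>x. c * (XX p U l x * XX p U l x))" using int_XX2[OF l l] .
    show "integrable M (\<lambda>x. c / real p * QQ p U l x)" using int_QQ[of l] l by auto
    show "(\<lambda>x. c / real p * QQ p U l x) \<in> borel_measurable (Fs M p U (l - 1))"
      using QQF[OF l1, of l] by measurable
  qed
qed

lemma mom_XX0: assumes l: "l \<in> {1..n}" shows "(\<integral>x. XX p U l x \<partial>M) = 0"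
proof -
  have l1: "l - 1 \<le> n" using l by auto
  have F: "(\<integral>x. aa U l x k * U l x k \<partial>M) = 0" "integrable M (\<lambda>x. aa U l x k * U l x k)" if k: "k < p" for k
  proof -
    have GF: "(\<lambda>x. aa U l x k) \<in> borel_measurable (Fs M p U (l - 1))" using aaF[OF l1 _ k] by auto
    have GI: "integrable M (\<lambda>x. aa U l x k)"
      by (rule intbd[where B="real n"]) (use AE_aa k l in \<open>auto\<close>)
    have hm: "(\<lambda>y. y k) \<in> borel_measurable (Rp p)" using k by measurable
    from fact[OF l GF GI hm sph_int1[OF p0 ps k]] sph_mom1[OF p0 ps k]
    show "(\<integral>x. aa U l x k * U l x k \<partial>M) = 0" "integrable M (\<lambda>x. aa U l x k * U l x k)" by auto
  qed
  have "(\<integral>x. XX p U l x \<partial>M) = (\<integral>x. (\<Sum>k<p. aa U l x k * U l x k) \<partial>M)"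
    unfolding XX_def by (simp add: mult.commute)
  also have "\<dots> = 0" by (subst Bochner_Integration.integral_sum) (auto intro!: F sum.neutral)
  finally show ?thesis .
qed

lemma mom_XXXX: assumes j: "j \<in> {1..n}" and l: "l \<in> {1..n}" and jl: "j < l"
  shows "(\<integral>x. XX p U j x * XX p U l x \<partial>M) = 0"
proof -
  have l1: "l - 1 \<le> n" using l by auto
  have F: "(\<integral>x. (XX p U j x * aa U l x k) * U l x k \<partial>M) = 0" "integrable M (\<lambda>x. (XX p U j x * aa U l x k) * U l x k)" if k: "k < p" for k
  proof -
    have GF: "(\<lambda>x. XX p U j x * aa U l x k) \<in> borel_measurable (Fs M p U (l - 1))"
      using aaF[OF l1 _ k, of l] XXF[OF l1, of j] j jl by (intro borel_measurable_times) auto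
    have GI: "integrable M (\<lambda>x. XX p U j x * aa U l x k)"
    proof (rule intbd[where B="real p * real n * real n"])
      show "(\<lambda>x. XX p U j x * aa U l x k) \<in> borel_measurable M"
        using GF by (rule measurable_from_subalg[OF subalg[OF l1]])
      show "AE x in M. \<bar>XX p U j x * aa U l x k\<bar> \<le> real p * real n * real n"
        using AE_aa AE_XX
      proof eventually_elim
        case (elim x)
        then have "\<bar>XX p U j x\<bar> \<le> real p * real n" "\<bar>aa U l x k\<bar> \<le> real n" using j l k by auto
        then have "\<bar>XX p U j x\<bar> * \<bar>aa U l x k\<bar> \<le> (real p * real n) * real n" by (intro mult_mono) auto
        then show ?case by (simp add: abs_mult)
      qed
    qed
    have hm: "(\<lambda>y. y k) \<in> borel_measurable (Rp p)" using k by measurable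
    from fact[OF l GF GI hm sph_int1[OF p0 ps k]] sph_mom1[OF p0 ps k]
    show "(\<integral>x. (XX p U j x * aa U l x k) * U l x k \<partial>M) = 0" "integrable M (\<lambda>x. (XX p U j x * aa U l x k) * U l x k)" by auto
  qed
  have "(\<integral>x. XX p U j x * XX p U l x \<partial>M) = (\<integral>x. (\<Sum>k<p. (XX p U j x * aa U l x k) * U l x k) \<partial>M)"
    unfolding XX_def[of p U l] by (simp add: sum_distrib_left mult_ac)
  also have "\<dots> = 0" by (subst Bochner_Integration.integral_sum) (auto intro!: F sum.neutral)
  finally show ?thesis .
qed

lemma mom_XXsq: assumes l: "l \<in> {1..n}"
  shows "(\<integral>x. XX p U l x * XX p U l x \<partial>M) = (\<integral>x. QQ p U l x \<partial>M) / real p"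
proof -
  have "space M \<in> sets (Fs M p U (l - 1))" using sets.top[of "Fs M p U (l - 1)"] by (simp add: Fs_space)
  from mom_cond[OF l this] show ?thesis
    by (simp add: indicator_def cong: Bochner_Integration.integral_cong)
qed

lemma aa_Suc: "l \<ge> 1 \<Longrightarrow> aa U (Suc l) x k = aa U l x k + U l x k"
  unfolding aa_def by (simp add: atLeastLessThanSuc)

lemma QQ_Suc: "l \<ge> 1 \<Longrightarrow> QQ p U (Suc l) x = QQ p U l x + 2 * XX p U l x + vinner p (U l x) (U l x)"
  unfolding QQ_def XX_def vinner_def
  by (simp add: aa_Suc algebra_simps sum.distrib sum_distrib_left)

lemma QQ_1: "QQ p U 1 x = 0"
  unfolding QQ_def aa_def by simp

lemma AE_QQ_formula: "AE x in M. \<forall>l\<in>{1..n+1}. QQ p U l x = real l - 1 + 2 * (\<Sum>j\<in>{1..<l}. XX p U j x)"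
  using AE_U
proof eventually_elim
  case (elim x)
  have "1 \<le> l \<longrightarrow> l \<le> n + 1 \<longrightarrow> QQ p U l x = real l - 1 + 2 * (\<Sum>j\<in>{1..<l}. XX p U j x)" for l
  proof (induction l)
    case 0 then show ?case by simp
  next
    case (Suc l)
    show ?case
    proof (cases "l = 0")
      case True then show ?thesis using QQ_1 by simp
    next
      case False
      show ?thesis
      proof (intro impI)
        assume "1 \<le> Suc l" "Suc l \<le> n + 1"
        then have l: "l \<ge> 1" "l \<le> n" using False by auto
        then have "vinner p (U l x) (U l x) = 1" using elim by auto
        then show "QQ p U (Suc l) x = real (Suc l) - 1 + 2 * (\<Sum>j\<in>{1..<Suc l}. XX p U j x)"
          using Suc.IH l QQ_Suc[OF l(1), of x] by (simp add: atLeastLessThanSuc algebra_simps)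
      qed
    qed
  qed
  then show ?case by auto
qed

lemma mom_QQ: assumes l: "l \<in> {1..n+1}" shows "(\<integral>x. QQ p U l x \<partial>M) = real l - 1"
proof -
  have "(\<integral>x. QQ p U l x \<partial>M) = (\<integral>x. real l - 1 + 2 * (\<Sum>j\<in>{1..<l}. XX p U j x) \<partial>M)"
  proof (rule integral_cong_AE)
    show "QQ p U l \<in> borel_measurable M" using QQ_meas[of l] l by auto
    show "(\<lambda>x. real l - 1 + 2 * (\<Sum>j\<in>{1..<l}. XX p U j x)) \<in> borel_measurable M"
      using l by (intro borel_measurable_add borel_measurable_times borel_measurable_sum XX_meas) auto
    show "AE x in M. QQ p U l x = real l - 1 + 2 * (\<Sum>j\<in>{1..<l}. XX p U j x)"
      using AE_QQ_formula by eventually_elim (use l in auto)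
  qed
  also have "\<dots> = real l - 1 + 2 * (\<Sum>j\<in>{1..<l}. (\<integral>x. XX p U j x \<partial>M))"
  proof -
    have "(\<integral>x. (\<Sum>j\<in>{1..<l}. XX p U j x) \<partial>M) = (\<Sum>j\<in>{1..<l}. (\<integral>x. XX p U j x \<partial>M))"
      by (rule Bochner_Integration.integral_sum) (use l in \<open>auto intro!: int_XX\<close>)
    then show ?thesis
      using l by (subst Bochner_Integration.integral_add) (auto intro!: integrable_sum int_XX simp: prob_space)
  qed
  also have "\<dots> = real l - 1" using l by (simp add: mom_XX0)
  finally show ?thesis .
qed

lemma mom_pair: assumes "j \<in> {1..n}" "l \<in> {1..n}"
  shows "(\<integral>x. XX p U j x * XX p U l x \<partial>M) = (if j = l then (real j - 1) / real p else 0)"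
proof -
  consider "j < l" | "j = l" | "l < j" by arith
  then show ?thesis
  proof cases
    case 1 then show ?thesis using mom_XXXX assms by simp
  next
    case 2 then show ?thesis using mom_XXsq mom_QQ assms by simp
  next
    case 3 then show ?thesis using mom_XXXX[of l j] assms by (simp add: mult.commute)
  qed
qed

definition "WW x = (\<Sum>j\<in>{1..n}. real (n - j) * XX p U j x)"

lemma WW_sq: "WW x * WW x = (\<Sum>j\<in>{1..n}. \<Sum>l\<in>{1..n}. real (n - j) * real (n - l) * (XX p U j x * XX p U l x))"
  unfolding WW_def by (simp add: sum_product mult_ac)

lemma int_WW2: "integrable M (\<lambda>x. WW x * WW x)"
  unfolding WW_sq by (intro Bochner_Integration.integrable_sum int_XX2) auto

lemma EW2: "(\<integral>x. WW x * WW x \<partial>M) \<le> (real n)^4 / real p"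
proof -
  have "(\<integral>x. WW x * WW x \<partial>M) = (\<Sum>j\<in>{1..n}. \<Sum>l\<in>{1..n}. (\<integral>x. real (n - j) * real (n - l) * (XX p U j x * XX p U l x) \<partial>M))"
    unfolding WW_sq
    by (subst Bochner_Integration.integral_sum, force intro!: Bochner_Integration.integrable_sum int_XX2)
       (intro sum.cong refl Bochner_Integration.integral_sum int_XX2, auto)
  also have "\<dots> = (\<Sum>j\<in>{1..n}. \<Sum>l\<in>{1..n}. real (n - j) * real (n - l) * (if j = l then (real j - 1) / real p else 0))"
    by (intro sum.cong refl) (simp add: mom_pair)
  also have "\<dots> = (\<Sum>j\<in>{1..n}. real (n - j) * real (n - j) * ((real j - 1) / real p))"
    by (simp add: if_distrib cong: if_cong)
  also have "\<dots> \<le> (\<Sum>j\<in>{1..n}. real n * real n * (real n / real p))"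
  proof (rule sum_mono)
    fix j assume j: "j \<in> {1..n}"
    have a: "real (n - j) * real (n - j) \<le> real n * real n" by (intro mult_mono) auto
    have b: "(real j - 1) / real p \<le> real n / real p" using j p0 by (intro divide_right_mono) auto
    show "real (n - j) * real (n - j) * ((real j - 1) / real p) \<le> real n * real n * (real n / real p)"
      using j by (intro mult_mono a b) auto
  qed
  also have "\<dots> = (real n)^4 / real p" by (simp add: power4_eq_xxxx)
  finally show ?thesis .
qed

lemma AE_T: "AE x in M. (\<Sum>l\<in>{1..n}. 2 / (real n)^2 * QQ p U l x) - 1 = 4 / (real n)^2 * WW x - 1 / real n"
  using AE_QQ_formula
proof eventually_elim
  case (elim x)
  have "(\<Sum>l\<in>{1..n}. QQ p U l x) = (\<Sum>l\<in>{1..n}. (real l - 1) + 2 * (\<Sum>j\<in>{1..<l}. XX p U j x))"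
    using elim by (intro sum.cong refl) auto
  also have "\<dots> = (\<Sum>l\<in>{1..n}. real l - 1) + 2 * (\<Sum>l\<in>{1..n}. \<Sum>j\<in>{1..<l}. XX p U j x)"
    by (simp add: sum.distrib sum_distrib_left)
  also have "\<dots> = real n * (real n - 1) / 2 + 2 * WW x"
    unfolding gauss_sum sum_swap_tri WW_def ..
  moreover have "(\<Sum>l\<in>{1..n}. 2 / (real n)^2 * QQ p U l x) = 2 / (real n)^2 * (\<Sum>l\<in>{1..n}. QQ p U l x)"
    by (rule sum_distrib_left[symmetric])
  ultimately have "(\<Sum>l\<in>{1..n}. 2 / (real n)^2 * QQ p U l x) = 2 / (real n)^2 * (real n * (real n - 1) / 2 + 2 * WW x)"
    by simp
  then show ?case using n1 by (simp add: field_simps power2_eq_square)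
qed

lemma main_bound:
  "(\<integral>\<^sup>+ x. ennreal (((\<Sum>l\<in>{1..n}. real_cond_exp M (gen_sigma M (Rp p) U {1..l - 1})
        (\<lambda>x. (sqrt (2 * real p) / real n * (\<Sum>i\<in>{1..<l}. vinner p (U i x) (U l x)))\<^sup>2) x) - 1)\<^sup>2) \<partial>M)
   \<le> ennreal (32 / real p + 2 / (real n)^2)"
proof -
  let ?c = "2 * real p / (real n)^2"
  have Dsq: "(\<lambda>x. (sqrt (2 * real p) / real n * (\<Sum>i\<in>{1..<l}. vinner p (U i x) (U l x)))\<^sup>2)
      = (\<lambda>x. ?c * (XX p U l x * XX p U l x))" for l
  proof
    fix x
    have "(\<Sum>i\<in>{1..<l}. vinner p (U i x) (U l x)) = XX p U l x"
      unfolding vinner_def XX_def aa_def by (subst sum.swap) (simp add: sum_distrib_left mult_ac)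
    then show "(sqrt (2 * real p) / real n * (\<Sum>i\<in>{1..<l}. vinner p (U i x) (U l x)))\<^sup>2 = ?c * (XX p U l x * XX p U l x)"
      by (simp add: power_mult_distrib power_divide power2_eq_square[of "XX p U l x"])
  qed
  have AEc: "AE x in M. \<forall>l\<in>{1..n}. real_cond_exp M (gen_sigma M (Rp p) U {1..l - 1})
        (\<lambda>x. (sqrt (2 * real p) / real n * (\<Sum>i\<in>{1..<l}. vinner p (U i x) (U l x)))\<^sup>2) x = 2 / (real n)^2 * QQ p U l x"
  proof (rule AE_finite_allI)
    fix l assume l: "l \<in> {1..n}"
    show "AE x in M. real_cond_exp M (gen_sigma M (Rp p) U {1..l - 1})
        (\<lambda>x. (sqrt (2 * real p) / real n * (\<Sum>i\<in>{1..<l}. vinner p (U i x) (U l x)))\<^sup>2) x = 2 / (real n)^2 * QQ p U l x"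
      using condexp[OF l, of ?c] p0 unfolding Dsq Fs_def by simp
  qed simp
  have "(\<integral>\<^sup>+ x. ennreal (((\<Sum>l\<in>{1..n}. real_cond_exp M (gen_sigma M (Rp p) U {1..l - 1})
        (\<lambda>x. (sqrt (2 * real p) / real n * (\<Sum>i\<in>{1..<l}. vinner p (U i x) (U l x)))\<^sup>2) x) - 1)\<^sup>2) \<partial>M)
      \<le> (\<integral>\<^sup>+ x. ennreal (32 / (real n)^4 * (WW x * WW x) + 2 / (real n)^2) \<partial>M)"
  proof (rule nn_integral_mono_AE)
    show "AE x in M. ennreal (((\<Sum>l\<in>{1..n}. real_cond_exp M (gen_sigma M (Rp p) U {1..l - 1})
        (\<lambda>x. (sqrt (2 * real p) / real n * (\<Sum>i\<in>{1..<l}. vinner p (U i x) (U l x)))\<^sup>2) x) - 1)\<^sup>2)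
      \<le> ennreal (32 / (real n)^4 * (WW x * WW x) + 2 / (real n)^2)"
      using AEc AE_T
    proof eventually_elim
      case (elim x)
      have "(\<Sum>l\<in>{1..n}. real_cond_exp M (gen_sigma M (Rp p) U {1..l - 1})
        (\<lambda>x. (sqrt (2 * real p) / real n * (\<Sum>i\<in>{1..<l}. vinner p (U i x) (U l x)))\<^sup>2) x)
        = (\<Sum>l\<in>{1..n}. 2 / (real n)^2 * QQ p U l x)"
        by (rule sum.cong[OF refl]) (use elim(1) in blast)
      then have "((\<Sum>l\<in>{1..n}. real_cond_exp M (gen_sigma M (Rp p) U {1..l - 1})
        (\<lambda>x. (sqrt (2 * real p) / real n * (\<Sum>i\<in>{1..<l}. vinner p (U i x) (U l x)))\<^sup>2) x) - 1)\<^sup>2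
        = (4 / (real n)^2 * WW x - 1 / real n)\<^sup>2"
        using elim(2) by simp
      also have "\<dots> \<le> 2 * (4 / (real n)^2 * WW x)^2 + 2 * (1 / real n)^2" by (rule sq_ineq)
      also have "\<dots> = 32 / (real n)^4 * (WW x * WW x) + 2 / (real n)^2"
        by (simp add: power2_eq_square power4_eq_xxxx field_simps)
      finally show ?case by (rule ennreal_leI)
    qed
  qed
  also have "\<dots> = ennreal (\<integral>x. 32 / (real n)^4 * (WW x * WW x) + 2 / (real n)^2 \<partial>M)"
  proof (rule nn_integral_eq_integral)
    show "integrable M (\<lambda>x. 32 / (real n)^4 * (WW x * WW x) + 2 / (real n)^2)"
      by (intro Bochner_Integration.integrable_add Bochner_Integration.integrable_mult_right int_WW2 integrable_const)
    show "AE x in M. 0 \<le> 32 / (real n)^4 * (WW x * WW x) + 2 / (real n)^2" by auto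
  qed
  also have "(\<integral>x. 32 / (real n)^4 * (WW x * WW x) + 2 / (real n)^2 \<partial>M) = 32 / (real n)^4 * (\<integral>x. WW x * WW x \<partial>M) + 2 / (real n)^2"
    using int_WW2 by (simp add: prob_space)
  also have "\<dots> \<le> 32 / (real n)^4 * ((real n)^4 / real p) + 2 / (real n)^2"
    using EW2 by (intro add_right_mono mult_left_mono) auto
  also have "\<dots> = 32 / real p + 2 / (real n)^2" using n1 by simp
  finally show ?thesis by (simp add: ennreal_leI)
qed

end

theorem lemma1:
  fixes p :: "nat \<Rightarrow> nat"
    and M :: "nat \<Rightarrow> 'a measure"
    and U :: "nat \<Rightarrow> nat \<Rightarrow> 'a \<Rightarrow> (nat \<Rightarrow> real)"
  assumes p_pos: "\<forall>n. p n > 0"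
    and p_lim: "filterlim p at_top sequentially"
    and prob: "\<forall>n. prob_space (M n)"
    and indep: "\<forall>n. prob_space.indep_vars (M n) (\<lambda>_. Rp (p n)) (U n) {1..n}"
    and unif: "\<forall>n. \<forall>i\<in>{1..n}. distr (M n) (Rp (p n)) (U n i) = uniform_sphere (p n)"
  shows
    "let D = (\<lambda>n l x. sqrt (2 * real (p n)) / real n *
                (\<Sum>i\<in>{1..<l}. vinner (p n) (U n i x) (U n l x)));
         F = (\<lambda>n l. gen_sigma (M n) (Rp (p n)) (U n) {1..l});
         \<sigma>2 = (\<lambda>n l. real_cond_exp (M n) (F n (l - 1)) (\<lambda>x. (D n l x)\<^sup>2))
     in (\<lambda>n. \<integral>\<^sup>+ x. ennreal (((\<Sum>l\<in>{1..n}. \<sigma>2 n l x) - 1)\<^sup>2) \<partial>M n) \<longlonglongrightarrow> 0"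
proof -
  have bound: "(\<integral>\<^sup>+ x. ennreal (((\<Sum>l\<in>{1..n}. real_cond_exp (M n) (gen_sigma (M n) (Rp (p n)) (U n) {1..l - 1})
        (\<lambda>x. (sqrt (2 * real (p n)) / real n * (\<Sum>i\<in>{1..<l}. vinner (p n) (U n i x) (U n l x)))\<^sup>2) x) - 1)\<^sup>2) \<partial>M n)
   \<le> ennreal (32 / real (p n) + 2 / (real n)^2)" if n: "n \<ge> 1" for n
  proof -
    interpret setting "M n" "U n" n "p n"
    proof (rule setting.intro)
      show "prob_space (M n)" using prob by blast
      show "0 < p n" using p_pos by blast
      show "1 \<le> n" by (rule n)
      show "prob_space.indep_vars (M n) (\<lambda>_. Rp (p n)) (U n) {1..n}" using indep by blast
      show "\<And>i. i \<in> {1..n} \<Longrightarrow> distr (M n) (Rp (p n)) (U n i) = uniform_sphere (p n)" using unif by blast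
    qed
    show ?thesis by (rule main_bound)
  qed
  have pr: "filterlim (\<lambda>n. real (p n)) at_top sequentially"
    by (rule filterlim_compose[OF filterlim_real_sequentially p_lim])
  have nr: "filterlim (\<lambda>n. (real n)^2) at_top sequentially"
    by (rule filterlim_pow_at_top[OF _ filterlim_real_sequentially]) simp
  have "(\<lambda>n. 32 / real (p n) + 2 / (real n)^2) \<longlonglongrightarrow> 0 + 0"
    by (intro tendsto_add real_tendsto_divide_at_top[OF tendsto_const] pr nr)
  then have lim: "(\<lambda>n. ennreal (32 / real (p n) + 2 / (real n)^2)) \<longlonglongrightarrow> 0"
    using tendsto_ennrealI[of "\<lambda>n. 32 / real (p n) + 2 / (real n)^2" 0 sequentially] by simp
  show ?thesis
    unfolding Let_def
  proof (rule tendsto_sandwich[OF _ _ tendsto_const lim])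
    show "\<forall>\<^sub>F n in sequentially. 0 \<le> (\<integral>\<^sup>+ x. ennreal (((\<Sum>l\<in>{1..n}. real_cond_exp (M n) (gen_sigma (M n) (Rp (p n)) (U n) {1..l - 1})
        (\<lambda>x. (sqrt (2 * real (p n)) / real n * (\<Sum>i\<in>{1..<l}. vinner (p n) (U n i x) (U n l x)))\<^sup>2) x) - 1)\<^sup>2) \<partial>M n)"
      by simp
    show "\<forall>\<^sub>F n in sequentially. (\<integral>\<^sup>+ x. ennreal (((\<Sum>l\<in>{1..n}. real_cond_exp (M n) (gen_sigma (M n) (Rp (p n)) (U n) {1..l - 1})
        (\<lambda>x. (sqrt (2 * real (p n)) / real n * (\<Sum>i\<in>{1..<l}. vinner (p n) (U n i x) (U n l x)))\<^sup>2) x) - 1)\<^sup>2) \<partial>M n)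
        \<le> ennreal (32 / real (p n) + 2 / (real n)^2)"
      by (rule eventually_sequentiallyI[of 1]) (rule bound)
  qed
qed

end
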